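(* If $\mathfrak{X}$ is a finite co-tree which validates $\mathcal{J}(\mathfrak{F}_3)$, then every point $x\in X$ has at most $2$ immediate predecessors.
   Context: A co-tree is a poset with a greatest element in which every principal upset $\uparrow x$ is a chain. An immediate predecessor of $x$ is a point $y<x$ such that no $z$ satisfies $y<z<x$. $\mathfrak{F}_3$ is the four-element co-tree with top $a$ and three pairwise incomparable minimal points $b,c,d$ below $a$. For a finite co-tree $\mathfrak{Y}$, the Jankov formula $\mathcal{J}(\mathfrak{Y})$ is a bi-intuitionistic formula with the property that a finite co-tree $\mathfrak{X}$ (viewed as a Kripke frame, with $\leftarrow$ interpreted by $x\models\varphi\leftarrow\psi$ iff there is $y\le x$ with $y\models\varphi$ and $y\not\models\psi$) refutes $\mathcal{J}(\mathfrak{Y})$ iff there is a surjective bi-p-morphism $\mathfrak{X}\to\mathfrak{Y}$. A bi-p-morphism is an order-preserving map $f$ such that $f(x)\le y$ implies $y=f(z)$ for some $z\ge x$, and $y\le f(x)$ implies $y=f(z)$ for some $z\le x$. *)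

theory Defs
  imports Main
begin

(* Bi-intuitionistic formulas; Coimp phi psi is  phi <- psi  (co-implication) *)
datatype 'v biform =
    Var 'v | Bot | Top
  | And "'v biform" "'v biform" | Or "'v biform" "'v biform"
  | Imp "'v biform" "'v biform" | Coimp "'v biform" "'v biform"

definition partial_order_on_set :: "'a set \<Rightarrow> ('a \<Rightarrow> 'a \<Rightarrow> bool) \<Rightarrow> bool" where
  "partial_order_on_set X le \<longleftrightarrow>
     (\<forall>x\<in>X. le x x) \<and>
     (\<forall>x\<in>X. \<forall>y\<in>X. le x y \<and> le y x \<longrightarrow> x = y) \<and>
     (\<forall>x\<in>X. \<forall>y\<in>X. \<forall>z\<in>X. le x y \<and> le y z \<longrightarrow> le x z)"

definition co_tree :: "'a set \<Rightarrow> ('a \<Rightarrow> 'a \<Rightarrow> bool) \<Rightarrow> bool" where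
  "co_tree X le \<longleftrightarrow> partial_order_on_set X le \<and>
     (\<exists>t\<in>X. \<forall>x\<in>X. le x t) \<and>
     (\<forall>x\<in>X. \<forall>y\<in>X. \<forall>z\<in>X. le x y \<and> le x z \<longrightarrow> le y z \<or> le z y)"

definition finite_co_tree :: "'a set \<Rightarrow> ('a \<Rightarrow> 'a \<Rightarrow> bool) \<Rightarrow> bool" where
  "finite_co_tree X le \<longleftrightarrow> finite X \<and> co_tree X le"

fun sat :: "'a set \<Rightarrow> ('a \<Rightarrow> 'a \<Rightarrow> bool) \<Rightarrow> ('v \<Rightarrow> 'a set) \<Rightarrow> 'a \<Rightarrow> 'v biform \<Rightarrow> bool" where
  "sat X le V x (Var p) = (x \<in> V p)"
| "sat X le V x Bot = False"
| "sat X le V x Top = True"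
| "sat X le V x (And a b) = (sat X le V x a \<and> sat X le V x b)"
| "sat X le V x (Or a b) = (sat X le V x a \<or> sat X le V x b)"
| "sat X le V x (Imp a b) = (\<forall>y\<in>X. le x y \<and> sat X le V y a \<longrightarrow> sat X le V y b)"
| "sat X le V x (Coimp a b) = (\<exists>y\<in>X. le y x \<and> sat X le V y a \<and> \<not> sat X le V y b)"

definition upset_valuation :: "'a set \<Rightarrow> ('a \<Rightarrow> 'a \<Rightarrow> bool) \<Rightarrow> ('v \<Rightarrow> 'a set) \<Rightarrow> bool" where
  "upset_valuation X le V \<longleftrightarrow>
     (\<forall>p. V p \<subseteq> X \<and> (\<forall>x\<in>V p. \<forall>y\<in>X. le x y \<longrightarrow> y \<in> V p))"

definition validates :: "'a set \<Rightarrow> ('a \<Rightarrow> 'a \<Rightarrow> bool) \<Rightarrow> 'v biform \<Rightarrow> bool" where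
  "validates X le \<phi> \<longleftrightarrow> (\<forall>V. upset_valuation X le V \<longrightarrow> (\<forall>x\<in>X. sat X le V x \<phi>))"

definition refutes :: "'a set \<Rightarrow> ('a \<Rightarrow> 'a \<Rightarrow> bool) \<Rightarrow> 'v biform \<Rightarrow> bool" where
  "refutes X le \<phi> \<longleftrightarrow> \<not> validates X le \<phi>"

definition bi_p_morphism ::
  "'a set \<Rightarrow> ('a \<Rightarrow> 'a \<Rightarrow> bool) \<Rightarrow> 'b set \<Rightarrow> ('b \<Rightarrow> 'b \<Rightarrow> bool) \<Rightarrow> ('a \<Rightarrow> 'b) \<Rightarrow> bool" where
  "bi_p_morphism X le Y leY f \<longleftrightarrow>
     (\<forall>x\<in>X. f x \<in> Y) \<and>
     (\<forall>x\<in>X. \<forall>x'\<in>X. le x x' \<longrightarrow> leY (f x) (f x')) \<and>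
     (\<forall>x\<in>X. \<forall>y\<in>Y. leY (f x) y \<longrightarrow> (\<exists>z\<in>X. le x z \<and> f z = y)) \<and>
     (\<forall>x\<in>X. \<forall>y\<in>Y. leY y (f x) \<longrightarrow> (\<exists>z\<in>X. le z x \<and> f z = y))"

definition surj_bi_p_morphism ::
  "'a set \<Rightarrow> ('a \<Rightarrow> 'a \<Rightarrow> bool) \<Rightarrow> 'b set \<Rightarrow> ('b \<Rightarrow> 'b \<Rightarrow> bool) \<Rightarrow> ('a \<Rightarrow> 'b) \<Rightarrow> bool" where
  "surj_bi_p_morphism X le Y leY f \<longleftrightarrow> bi_p_morphism X le Y leY f \<and> f ` X = Y"

(* F_3: top a = 0, minimal points b = 1, c = 2, d = 3 *)
definition F3 :: "nat set" where "F3 = {0, 1, 2, 3}"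
definition F3_le :: "nat \<Rightarrow> nat \<Rightarrow> bool" where "F3_le x y \<longleftrightarrow> x = y \<or> y = 0"

definition imm_preds :: "'a set \<Rightarrow> ('a \<Rightarrow> 'a \<Rightarrow> bool) \<Rightarrow> 'a \<Rightarrow> 'a set" where
  "imm_preds X le x = {y \<in> X. le y x \<and> y \<noteq> x \<and>
      \<not> (\<exists>z\<in>X. le y z \<and> y \<noteq> z \<and> le z x \<and> z \<noteq> x)}"

definition is_jankov_F3 :: "'a itself \<Rightarrow> 'v biform \<Rightarrow> bool" where
  "is_jankov_F3 _ \<phi> \<longleftrightarrow>
     (\<forall>(X :: 'a set) le. finite_co_tree X le \<longrightarrow>
        (refutes X le \<phi> \<longleftrightarrow> (\<exists>f. surj_bi_p_morphism X le F3 F3_le f)))"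

end

theory Submission
  imports Defs
begin

lemma three_elems:
  assumes "card A > 2"
  shows "\<exists>a b c. a \<in> A \<and> b \<in> A \<and> c \<in> A \<and> a \<noteq> b \<and> a \<noteq> c \<and> b \<noteq> c"
proof -
  have "finite A" using assms card.infinite by fastforce
  obtain a where a: "a \<in> A" using assms by fastforce
  have "card (A - {a}) > 1" using assms a \<open>finite A\<close> by simp
  then obtain b where b: "b \<in> A - {a}" by (metis all_not_in_conv card.empty not_less_zero)
  have "card (A - {a} - {b}) > 0" using \<open>card (A - {a}) > 1\<close> b \<open>finite A\<close> by simp
  then obtain c where c: "c \<in> A - {a} - {b}" by (metis all_not_in_conv card.empty less_irrefl)
  show ?thesis using a b c by blast
qed

lemma surj_exists:
  assumes ct: "co_tree X le" and xX: "x \<in> X"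
    and p: "p1 \<in> imm_preds X le x" "p2 \<in> imm_preds X le x" "p3 \<in> imm_preds X le x"
    and d: "p1 \<noteq> p2" "p1 \<noteq> p3" "p2 \<noteq> p3"
  shows "\<exists>f. surj_bi_p_morphism X le F3 F3_le f"
proof -
  have po: "partial_order_on_set X le" and tr: "\<forall>x\<in>X. \<forall>y\<in>X. \<forall>z\<in>X. le x y \<and> le x z \<longrightarrow> le y z \<or> le z y"
    using ct unfolding co_tree_def by auto
  obtain t where t: "t \<in> X" "\<forall>x\<in>X. le x t" using ct unfolding co_tree_def by auto
  have refl: "\<And>u. u \<in> X \<Longrightarrow> le u u" using po unfolding partial_order_on_set_def by auto
  have anti: "\<And>u v. u \<in> X \<Longrightarrow> v \<in> X \<Longrightarrow> le u v \<Longrightarrow> le v u \<Longrightarrow> u = v"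
    using po unfolding partial_order_on_set_def by blast
  have trans: "\<And>u v w. u \<in> X \<Longrightarrow> v \<in> X \<Longrightarrow> w \<in> X \<Longrightarrow> le u v \<Longrightarrow> le v w \<Longrightarrow> le u w"
    using po unfolding partial_order_on_set_def by blast
  have pi: "\<And>q. q \<in> imm_preds X le x \<Longrightarrow> q \<in> X \<and> le q x \<and> q \<noteq> x \<and>
      (\<forall>z\<in>X. le q z \<and> le z x \<longrightarrow> z = q \<or> z = x)"
    unfolding imm_preds_def by blast
  define f where "f u = (if le x u then 0 else if le u p1 then 1 else if le u p2 then 2 else (3::nat))" for u
  have key: "\<And>q u v. q \<in> imm_preds X le x \<Longrightarrow> u \<in> X \<Longrightarrow> v \<in> X \<Longrightarrow> le u q \<Longrightarrow> le u v
      \<Longrightarrow> \<not> le x v \<Longrightarrow> le v q"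
  proof -
    fix q u v assume q: "q \<in> imm_preds X le x" and u: "u \<in> X" and v: "v \<in> X"
      and uq: "le u q" and uv: "le u v" and nxv: "\<not> le x v"
    from pi[OF q] have qX: "q \<in> X" "le q x" "q \<noteq> x" and im: "\<forall>z\<in>X. le q z \<and> le z x \<longrightarrow> z = q \<or> z = x" by auto
    show "le v q"
    proof (rule ccontr)
      assume nvq: "\<not> le v q"
      then have "le q v" using tr u v qX uq uv by blast
      then have "le v x \<or> le x v" using tr qX v xX by blast
      then have "le v x" using nxv by blast
      then have "v = q \<or> v = x" using im v \<open>le q v\<close> by blast
      then show False using nvq nxv refl v by blast
    qed
  qed
  have p1i: "p1 \<in> X" "le p1 x" "p1 \<noteq> x" using pi[OF p(1)] by auto
  have p2i: "p2 \<in> X" "le p2 x" "p2 \<noteq> x" using pi[OF p(2)] by auto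
  have p3i: "p3 \<in> X" "le p3 x" "p3 \<noteq> x" using pi[OF p(3)] by auto
  have nx: "\<And>q. q \<in> imm_preds X le x \<Longrightarrow> \<not> le x q"
    using pi anti xX by blast
  have f1: "f p1 = 1" using nx[OF p(1)] refl[OF p1i(1)] unfolding f_def by simp
  have f2: "f p2 = 2"
  proof -
    have "\<not> le p2 p1" using pi[OF p(2)] p1i d(1) by blast
    then show ?thesis using nx[OF p(2)] refl[OF p2i(1)] unfolding f_def by simp
  qed
  have f3: "f p3 = 3"
  proof -
    have "\<not> le p3 p1" using pi[OF p(3)] p1i d(2) by blast
    moreover have "\<not> le p3 p2" using pi[OF p(3)] p2i d(3) by blast
    ultimately show ?thesis using nx[OF p(3)] unfolding f_def by simp
  qed
  have ft: "f t = 0" using t xX unfolding f_def by simp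
  have fx: "f x = 0" using refl[OF xX] unfolding f_def by simp
  have mono: "\<forall>u\<in>X. \<forall>v\<in>X. le u v \<longrightarrow> F3_le (f u) (f v)"
  proof (intro ballI impI)
    fix u v assume u: "u \<in> X" and v: "v \<in> X" and uv: "le u v"
    show "F3_le (f u) (f v)"
    proof (cases "le x v")
      case True then show ?thesis unfolding F3_le_def f_def by simp
    next
      case nxv: False
      then have nxu: "\<not> le x u" using trans xX u v uv by blast
      show ?thesis
      proof (cases "le u p1")
        case True
        have "le v p1" using key[OF p(1) u v True uv nxv] .
        then show ?thesis using True nxu nxv unfolding F3_le_def f_def by simp
      next
        case n1: False
        then have n1v: "\<not> le v p1" using trans u v p1i(1) uv by blast
        show ?thesis
        proof (cases "le u p2")
          case True
          have "le v p2" using key[OF p(2) u v True uv nxv] .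
          then show ?thesis using True nxu nxv n1 n1v unfolding F3_le_def f_def by simp
        next
          case False
          then have "\<not> le v p2" using trans u v p2i(1) uv by blast
          then show ?thesis using False nxu nxv n1 n1v unfolding F3_le_def f_def by simp
        qed
      qed
    qed
  qed
  have range: "\<forall>u\<in>X. f u \<in> F3" unfolding f_def F3_def by auto
  have img: "f ` X = F3"
  proof
    show "f ` X \<subseteq> F3" using range by auto
    have "F3 = f ` {x,p1,p2,p3}" unfolding F3_def using fx f1 f2 f3 by simp
    also have "\<dots> \<subseteq> f ` X" using xX p1i p2i p3i by blast
    finally show "F3 \<subseteq> f ` X" .
  qed
  have up: "\<forall>u\<in>X. \<forall>y\<in>F3. F3_le (f u) y \<longrightarrow> (\<exists>z\<in>X. le u z \<and> f z = y)"
  proof (intro ballI impI)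
    fix u y assume u: "u \<in> X" and "y \<in> F3" and h: "F3_le (f u) y"
    then have "y = f u \<or> y = 0" unfolding F3_le_def by auto
    then show "\<exists>z\<in>X. le u z \<and> f z = y"
    proof
      assume "y = f u" then show ?thesis using u refl by blast
    next
      assume "y = 0" then show ?thesis using t ft u by blast
    qed
  qed
  have down: "\<forall>u\<in>X. \<forall>y\<in>F3. F3_le y (f u) \<longrightarrow> (\<exists>z\<in>X. le z u \<and> f z = y)"
  proof (intro ballI impI)
    fix u y assume u: "u \<in> X" and y: "y \<in> F3" and yu: "F3_le y (f u)"
    show "\<exists>z\<in>X. le z u \<and> f z = y"
    proof (cases "y = f u")
      case True then show ?thesis using u refl by blast
    next
      case False
      then have fu: "f u = 0" using yu unfolding F3_le_def by simp
      then have xu: "le x u" unfolding f_def by (auto split: if_splits)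
      have l1: "le p1 u" using trans[OF p1i(1) xX u p1i(2) xu] .
      have l2: "le p2 u" using trans[OF p2i(1) xX u p2i(2) xu] .
      have l3: "le p3 u" using trans[OF p3i(1) xX u p3i(2) xu] .
      have "y = 0 \<or> y = 1 \<or> y = 2 \<or> y = 3" using y unfolding F3_def by simp
      then show ?thesis
      proof (elim disjE)
        assume "y = 0" then show ?thesis using fu u refl by metis
      next
        assume "y = 1" then show ?thesis using l1 f1 p1i(1) by blast
      next
        assume "y = 2" then show ?thesis using l2 f2 p2i(1) by blast
      next
        assume "y = 3" then show ?thesis using l3 f3 p3i(1) by blast
      qed
    qed
  qed
  have "surj_bi_p_morphism X le F3 F3_le f" unfolding surj_bi_p_morphism_def bi_p_morphism_def
    using range mono up down img by (intro conjI)
  then show ?thesis by blast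
qed

theorem lemma3p8:
  fixes X :: "'a set" and le :: "'a \<Rightarrow> 'a \<Rightarrow> bool" and J :: "'v biform"
  assumes "is_jankov_F3 TYPE('a) J"
    and "finite_co_tree X le"
    and "validates X le J"
  shows "\<forall>x\<in>X. card (imm_preds X le x) \<le> 2"
proof (rule ccontr)
  assume "\<not> (\<forall>x\<in>X. card (imm_preds X le x) \<le> 2)"
  then obtain x where x: "x \<in> X" "card (imm_preds X le x) > 2" by force
  then obtain p1 p2 p3 where pp: "p1 \<in> imm_preds X le x" "p2 \<in> imm_preds X le x" "p3 \<in> imm_preds X le x"
    "p1 \<noteq> p2" "p1 \<noteq> p3" "p2 \<noteq> p3" using three_elems by metis
  have ct: "co_tree X le" using assms(2) unfolding finite_co_tree_def by simp
  have "\<exists>f. surj_bi_p_morphism X le F3 F3_le f" using surj_exists[OF ct x(1) pp] .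
  then have "refutes X le J" using assms(1,2) unfolding is_jankov_F3_def by blast
  then show False using assms(3) unfolding refutes_def by simp
qed

end
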